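(* Let $E\in\mathbb R$, $\eta>0$ and $n\ge0$. Then, in the sense of quadratic forms, $$\tilde\Gamma(0)\ \ge\ \sum_{x\in S_n}\ \sum_{y\in\mathcal N_x^+}G(0,x;E+i\eta)\,\tilde\Gamma(y)\,G(0,x;E+i\eta)^*.$$
   Context: Let $K\ge 2$ be an integer and let $\mathcal T$ be the rooted tree with root $0$ in which every vertex has exactly $K$ children. $x_-$ denotes the parent of $x$, $\mathcal N_x^+$ the set of children of $x$, and $S_n$ the set of vertices at distance $n$ from $0$. $H$ acts on $\ell^2(\mathcal T;\mathbb C^W)$ with blocks $I_W$ between adjacent vertices, Hermitian matrices $U(x)$ on the diagonal, and $0$ otherwise. $G(x,y;z)$ is the $(x,y)$ block of $(H-z)^{-1}$. For $y\ne0$, $\Gamma(y)=G^{\mathcal T_{y_-}}(y,y;E+i\eta)$, the $(y,y)$ block of the resolvent of the restriction of $H$ to the tree with $y_-$ deleted. Also $\Gamma(0)=G(0,0;E+i\eta)$, and $\tilde\Gamma(y)=(\Gamma(y)-\Gamma(y)^* )/(2i)$. *)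

theory Defs
  imports "HOL-Analysis.Analysis"
begin

text \<open>Vertices of the rooted K-ary tree: words over {0..<K}; the root 0 is the empty word.
  The children of x are x @ [k], k < K; the parent of x (x nonempty) is butlast x.\<close>

definition tree_vertices :: "nat \<Rightarrow> nat list set" where
  "tree_vertices K = {xs. set xs \<subseteq> {..<K}}"

definition tree_parent :: "nat list \<Rightarrow> nat list" where
  "tree_parent x = butlast x"

definition tree_children :: "nat \<Rightarrow> nat list \<Rightarrow> nat list set" where
  "tree_children K x = {x @ [k] | k. k < K}"

definition sphere :: "nat \<Rightarrow> nat \<Rightarrow> nat list set" where
  "sphere K n = {x \<in> tree_vertices K. length x = n}"

definition tree_adj :: "nat \<Rightarrow> nat list \<Rightarrow> nat list \<Rightarrow> bool" where
  "tree_adj K x y \<longleftrightarrow> x \<in> tree_vertices K \<and> y \<in> tree_vertices K \<and>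
     ((x \<noteq> [] \<and> y = tree_parent x) \<or> (y \<noteq> [] \<and> x = tree_parent y))"

definition cadj :: "complex^'w^'w \<Rightarrow> complex^'w^'w" where
  "cadj A = (\<chi> i j. cnj (A $ j $ i))"

definition hermitian_mat :: "complex^'w^'w \<Rightarrow> bool" where
  "hermitian_mat A \<longleftrightarrow> cadj A = A"

text \<open>psi is (H_A - z)^{-1} applied to delta_y tensor v, where H_A is the restriction of H to
  the vertex set A: psi is supported on A, square summable, and solves the equation on A.
  (H psi)(x) = U(x) psi(x) + sum of psi over neighbours (blocks I_W).\<close>
definition res_sol ::
  "nat \<Rightarrow> (nat list \<Rightarrow> complex^'w^'w) \<Rightarrow> nat list set \<Rightarrow> complex \<Rightarrow> nat list \<Rightarrow> complex^'w
   \<Rightarrow> (nat list \<Rightarrow> complex^'w) \<Rightarrow> bool" where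
  "res_sol K U A z y v \<psi> \<longleftrightarrow>
     (\<forall>x. x \<notin> A \<longrightarrow> \<psi> x = 0) \<and>
     ((\<lambda>x. (norm (\<psi> x))\<^sup>2) summable_on A) \<and>
     (\<forall>x\<in>A. U x *v \<psi> x + (\<Sum>w\<in>{w\<in>A. tree_adj K x w}. \<psi> w) - z *s \<psi> x
              = (if x = y then v else 0))"

text \<open>(x,y) block of the resolvent (H_A - z)^{-1}: column j is the solution with v = e_j.\<close>
definition green ::
  "nat \<Rightarrow> (nat list \<Rightarrow> complex^'w^'w) \<Rightarrow> nat list set \<Rightarrow> complex \<Rightarrow> nat list \<Rightarrow> nat list
   \<Rightarrow> complex^'w^'w" where
  "green K U A z x y = (\<chi> i j. (THE \<psi>. res_sol K U A z y (axis j 1) \<psi>) x $ i)"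

definition Gam ::
  "nat \<Rightarrow> (nat list \<Rightarrow> complex^'w^'w) \<Rightarrow> real \<Rightarrow> real \<Rightarrow> nat list \<Rightarrow> complex^'w^'w" where
  "Gam K U E \<eta> y =
     (if y = [] then green K U (tree_vertices K) (Complex E \<eta>) [] []
      else green K U (tree_vertices K - {tree_parent y}) (Complex E \<eta>) y y)"

definition imag_part :: "complex^'w^'w \<Rightarrow> complex^'w^'w" where
  "imag_part A = (\<chi> i j. (A $ i $ j - cnj (A $ j $ i)) / (2 * \<i>))"

definition qform :: "complex^'w \<Rightarrow> complex^'w^'w \<Rightarrow> complex" where
  "qform v A = (\<Sum>i\<in>UNIV. \<Sum>j\<in>UNIV. cnj (v $ i) * A $ i $ j * v $ j)"

definition qf_le :: "complex^'w^'w \<Rightarrow> complex^'w^'w \<Rightarrow> bool" where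
  "qf_le A B \<longleftrightarrow> (\<forall>v. Re (qform v A) \<le> Re (qform v B))"

end

theory Submission
  imports Defs "HOL-Library.Function_Algebras" "HOL-Library.Diagonal_Subsequence"
begin


definition nb :: "nat \<Rightarrow> nat list set \<Rightarrow> nat list \<Rightarrow> nat list set" where
  "nb K A x = {w\<in>A. tree_adj K x w}"

lemma nb_sub: "nb K A x \<subseteq> insert (butlast x) ((\<lambda>k. x @ [k]) ` {..<K})"
proof
  fix w assume "w \<in> nb K A x"
  hence "tree_adj K x w" by (simp add: nb_def)
  hence w: "w \<in> tree_vertices K" and c: "(x \<noteq> [] \<and> w = butlast x) \<or> (w \<noteq> [] \<and> x = butlast w)"
    by (auto simp: tree_adj_def tree_parent_def)
  show "w \<in> insert (butlast x) ((\<lambda>k. x @ [k]) ` {..<K})"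
  proof (cases "w \<noteq> [] \<and> x = butlast w")
    case True
    hence "w = x @ [last w]" by (metis append_butlast_last_id)
    moreover have "set w \<subseteq> {..<K}" using w by (simp add: tree_vertices_def)
    hence "last w < K" using True by (meson lessThan_iff subsetD last_in_set)
    ultimately show ?thesis by blast
  next
    case False thus ?thesis using c by auto
  qed
qed

lemma finite_nb: "finite (nb K A x)"
  by (rule finite_subset[OF nb_sub]) auto

lemma card_nb: "card (nb K A x) \<le> Suc K"
proof -
  have "card (nb K A x) \<le> card (insert (butlast x) ((\<lambda>k. x @ [k]) ` {..<K}))"
    by (rule card_mono[OF _ nb_sub]) auto
  also have "\<dots> \<le> Suc (card ((\<lambda>k. x @ [k]) ` {..<K}))" by (rule card_insert_le_m1) auto
  also have "\<dots> \<le> Suc K" using card_image_le[of "{..<K}" "\<lambda>k. x @ [k]"] by simp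
  finally show ?thesis .
qed

lemma adj_sym: "tree_adj K x w = tree_adj K w x"
  unfolding tree_adj_def by auto

lemma adj_len: "tree_adj K x w \<Longrightarrow> length w \<le> Suc (length x)"
  unfolding tree_adj_def tree_parent_def by auto

definition ip :: "complex^'w \<Rightarrow> complex^'w \<Rightarrow> complex" where
  "ip p q = (\<Sum>i\<in>UNIV. cnj (p$i) * q$i)"

lemma ip_add_right: "ip p (q + r) = ip p q + ip p r"
  by (simp add: ip_def distrib_left sum.distrib)
lemma ip_diff_right: "ip p (q - r) = ip p q - ip p r"
  by (simp add: ip_def right_diff_distrib sum_subtractf)
lemma ip_add_left: "ip (p + q) r = ip p r + ip q r"
  by (simp add: ip_def distrib_right sum.distrib)
lemma ip_diff_left: "ip (p - q) r = ip p r - ip q r"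
  by (simp add: ip_def left_diff_distrib sum_subtractf)
lemma ip_zero_right[simp]: "ip p 0 = 0" by (simp add: ip_def)
lemma ip_zero_left[simp]: "ip 0 p = 0" by (simp add: ip_def)
lemma ip_scale_right: "ip p (c *s q) = c * ip p q"
  by (simp add: ip_def sum_distrib_left algebra_simps)
lemma ip_scale_left: "ip (c *s p) q = cnj c * ip p q"
  by (simp add: ip_def sum_distrib_left algebra_simps)
lemma ip_sum_right: "ip p (sum f S) = (\<Sum>s\<in>S. ip p (f s))"
  by (induction S rule: infinite_finite_induct) (auto simp: ip_add_right)
lemma ip_sum_left: "ip (sum f S) q = (\<Sum>s\<in>S. ip (f s) q)"
  by (induction S rule: infinite_finite_induct) (auto simp: ip_add_left)
lemma ip_cnj: "cnj (ip p q) = ip q p"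
  by (simp add: ip_def mult.commute)

lemma ip_mat: "ip p (M *v q) = ip (cadj M *v p) q"
proof -
  have "ip p (M *v q) = (\<Sum>i\<in>UNIV. \<Sum>j\<in>UNIV. cnj (p$i) * M$i$j * q$j)"
    by (simp add: ip_def matrix_vector_mult_def sum_distrib_left mult.assoc)
  also have "\<dots> = (\<Sum>j\<in>UNIV. \<Sum>i\<in>UNIV. cnj (p$i) * M$i$j * q$j)" by (rule sum.swap)
  also have "\<dots> = ip (cadj M *v p) q"
    by (simp add: ip_def matrix_vector_mult_def cadj_def sum_distrib_right sum_distrib_left mult_ac)
  finally show ?thesis .
qed

lemma norm_vec_sq: "(norm (p::complex^'w))\<^sup>2 = (\<Sum>i\<in>UNIV. (cmod (p$i))\<^sup>2)"
  by (simp add: norm_vec_def L2_set_def sum_nonneg)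

lemma cnj_mult_self: "cnj z * z = complex_of_real ((cmod z)\<^sup>2)"
  by (metis complex_norm_square mult.commute of_real_power)

lemma ip_self: "ip p p = of_real ((norm p)\<^sup>2)"
  unfolding ip_def norm_vec_sq of_real_sum by (simp only: cnj_mult_self)

lemma ip_bound: "cmod (ip p q) \<le> norm p * norm q"
proof -
  have "cmod (ip p q) \<le> (\<Sum>i\<in>UNIV. cmod (cnj (p$i) * q$i))"
    unfolding ip_def by (rule norm_sum)
  also have "\<dots> = (\<Sum>i\<in>UNIV. \<bar>cmod (p$i)\<bar> * \<bar>cmod (q$i)\<bar>)" by (simp add: norm_mult)
  also have "\<dots> \<le> L2_set (\<lambda>i. cmod (p$i)) UNIV * L2_set (\<lambda>i. cmod (q$i)) UNIV"
    by (rule L2_set_mult_ineq)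
  finally show ?thesis by (simp add: norm_vec_def)
qed

lemma ip_bound2: "cmod (ip p q) \<le> ((norm p)\<^sup>2 + (norm q)\<^sup>2) / 2"
proof -
  have "norm p * norm q \<le> ((norm p)\<^sup>2 + (norm q)\<^sup>2) / 2"
    using sum_squares_bound[of "norm p" "norm q"] by (simp add: power2_eq_square)
  thus ?thesis using ip_bound[of p q] by linarith
qed

lemma cadj_herm: "hermitian_mat M \<Longrightarrow> cadj M = M" by (simp add: hermitian_mat_def)

lemma ip_bound3: "cmod (ip p q) \<le> (norm p)\<^sup>2 + (norm q)\<^sup>2"
proof -
  have a: "cmod (ip p q) * 2 \<le> (norm p)\<^sup>2 + (norm q)\<^sup>2" using ip_bound2[of p q] by simp
  have b: "0 \<le> cmod (ip p q)" by simp
  from a b show ?thesis by linarith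
qed


lemma res_solD:
  assumes "res_sol K U A z b v \<psi>"
  shows "\<And>x. x \<notin> A \<Longrightarrow> \<psi> x = 0"
    and "(\<lambda>x. (norm (\<psi> x))\<^sup>2) summable_on A"
    and "\<And>x. x \<in> A \<Longrightarrow> U x *v \<psi> x + (\<Sum>w\<in>nb K A x. \<psi> w) - z *s \<psi> x = (if x = b then v else 0)"
  using assms unfolding res_sol_def nb_def by auto

lemma res_solI:
  assumes "\<And>x. x \<notin> A \<Longrightarrow> \<psi> x = 0"
    and "(\<lambda>x. (norm (\<psi> x))\<^sup>2) summable_on A"
    and "\<And>x. x \<in> A \<Longrightarrow> U x *v \<psi> x + (\<Sum>w\<in>nb K A x. \<psi> w) - z *s \<psi> x = (if x = b then v else 0)"
  shows "res_sol K U A z b v \<psi>"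
  using assms unfolding res_sol_def nb_def by auto

lemma ip_summable:
  assumes "(\<lambda>x. (norm (f x))\<^sup>2) summable_on A" "(\<lambda>x. (norm (g x))\<^sup>2) summable_on A"
  shows "(\<lambda>x. ip (f x) (g x)) summable_on A"
proof -
  have "(\<lambda>x. norm (ip (f x) (g x))) summable_on A"
  proof (rule summable_on_comparison_test[OF summable_on_add[OF assms]])
    fix x show "norm (ip (f x) (g x)) \<le> (norm (f x))\<^sup>2 + (norm (g x))\<^sup>2"
      by (rule ip_bound3)
  qed simp
  thus ?thesis by (rule abs_summable_summable)
qed

abbreviation "EE K A \<equiv> Sigma A (nb K A)"

lemma E_swap: "prod.swap ` (EE K A) = EE K A"
proof (intro set_eqI iffI)
  fix p assume "p \<in> prod.swap ` (EE K A)"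
  then show "p \<in> EE K A" by (auto simp: nb_def adj_sym)
next
  fix p assume "p \<in> EE K A"
  hence "prod.swap p \<in> EE K A" by (cases p) (auto simp: nb_def adj_sym)
  moreover have "p = prod.swap (prod.swap p)" by simp
  ultimately show "p \<in> prod.swap ` (EE K A)" by (rule rev_image_eqI)
qed

lemma E_summable1:
  assumes "(\<lambda>x. (norm (f x))\<^sup>2) summable_on A"
  shows "(\<lambda>(x,w). (norm (f x))\<^sup>2) summable_on EE K A"
proof (rule summable_on_SigmaI[where g="\<lambda>x. real (card (nb K A x)) * (norm (f x))\<^sup>2"])
  show "((\<lambda>y. (\<lambda>(x,w). (norm (f x))\<^sup>2) (x,y)) has_sum real (card (nb K A x)) * (norm (f x))\<^sup>2) (nb K A x)"
    if "x \<in> A" for x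
    using finite_nb by (auto intro!: has_sum_finiteI)
  show "(\<lambda>x. real (card (nb K A x)) * (norm (f x))\<^sup>2) summable_on A"
  proof (rule summable_on_comparison_test[OF summable_on_cmult_right[OF assms, of "real (Suc K)"]])
    fix x show "real (card (nb K A x)) * (norm (f x))\<^sup>2 \<le> real (Suc K) * (norm (f x))\<^sup>2"
      using card_nb[of K A x] by (intro mult_right_mono) auto
  qed simp
qed auto

lemma E_summable2:
  assumes "(\<lambda>x. (norm (f x))\<^sup>2) summable_on A"
  shows "(\<lambda>(x,w). (norm (f w))\<^sup>2) summable_on EE K A"
proof -
  have "(\<lambda>(x,w). (norm (f x))\<^sup>2) summable_on prod.swap ` (EE K A)"
    using E_summable1[OF assms] E_swap by metis
  hence "((\<lambda>(x,w). (norm (f x))\<^sup>2) \<circ> prod.swap) summable_on EE K A"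
    by (subst (asm) summable_on_reindex) auto
  thus ?thesis by (simp add: o_def case_prod_unfold)
qed

lemma swap_inj: "inj_on prod.swap X" by (auto simp: inj_on_def)

lemma edge_has_sum:
  fixes K :: nat
  assumes "(\<lambda>x. (norm (f x))\<^sup>2) summable_on A" "(\<lambda>x. (norm (g x))\<^sup>2) summable_on A"
  defines "S \<equiv> infsum (\<lambda>(x,w). ip (f x) (g w)) (EE K A)"
  shows "((\<lambda>x. \<Sum>w\<in>nb K A x. ip (f x) (g w)) has_sum S) A"
    and "((\<lambda>x. \<Sum>w\<in>nb K A x. ip (f w) (g x)) has_sum S) A"
proof -
  define h where "h = (\<lambda>(x,w). ip (f x) (g w))"
  have hs: "h summable_on EE K A"
  proof -
    have "(\<lambda>p. norm (h p)) summable_on EE K A"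
    proof (rule summable_on_comparison_test[OF summable_on_add[OF E_summable1[OF assms(1)] E_summable2[OF assms(2)]]])
      fix p :: "nat list \<times> nat list"
      obtain a b where p: "p = (a,b)" by (cases p)
      have "norm (ip (f a) (g b)) \<le> (norm (f a))\<^sup>2 + (norm (g b))\<^sup>2"
        by (rule ip_bound3)
      thus "norm (h p) \<le> (case p of (x, w) \<Rightarrow> (norm (f x))\<^sup>2) + (case p of (x, w) \<Rightarrow> (norm (g w))\<^sup>2)"
        by (simp add: h_def p)
    qed simp
    thus ?thesis by (rule abs_summable_summable)
  qed
  have 1: "((\<lambda>x. infsum (\<lambda>w. h (x,w)) (nb K A x)) has_sum infsum h (EE K A)) A"
  proof -
    have a: "(\<lambda>(x,y). h (x,y)) summable_on EE K A" using hs by simp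
    have e: "(\<lambda>(x,y). h (x,y)) = h" by auto
    have eq: "infsum (\<lambda>x. infsum (\<lambda>y. h (x,y)) (nb K A x)) A = infsum h (EE K A)"
      using infsum_Sigma'_banach[OF a] by (simp only: e)
    show ?thesis using has_sum_infsum[OF summable_on_Sigma_banach[OF a]] by (simp only: eq)
  qed
  show "((\<lambda>x. \<Sum>w\<in>nb K A x. ip (f x) (g w)) has_sum S) A"
  proof -
    have "infsum (\<lambda>w. h (x,w)) (nb K A x) = (\<Sum>w\<in>nb K A x. ip (f x) (g w))" for x
      using finite_nb by (simp add: h_def)
    thus ?thesis using 1 by (simp add: S_def h_def[symmetric])
  qed
  have hs2: "(h \<circ> prod.swap) summable_on EE K A"
    using hs E_swap summable_on_reindex[OF swap_inj, of h "EE K A"] by simp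
  have 2: "((\<lambda>x. infsum (\<lambda>w. (h \<circ> prod.swap) (x,w)) (nb K A x)) has_sum infsum (h \<circ> prod.swap) (EE K A)) A"
  proof -
    have a: "(\<lambda>(x,y). (h \<circ> prod.swap) (x,y)) summable_on EE K A" using hs2 by (simp only: case_prod_eta)
    have e: "(\<lambda>(x,y). (h \<circ> prod.swap) (x,y)) = h \<circ> prod.swap" by auto
    have eq: "infsum (\<lambda>x. infsum (\<lambda>y. (h \<circ> prod.swap) (x,y)) (nb K A x)) A = infsum (h \<circ> prod.swap) (EE K A)"
      using infsum_Sigma'_banach[OF a] by (simp only: e)
    show ?thesis using has_sum_infsum[OF summable_on_Sigma_banach[OF a]] by (simp only: eq)
  qed
  have 3: "infsum (h \<circ> prod.swap) (EE K A) = infsum h (EE K A)"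
    using infsum_reindex[OF swap_inj, of h "EE K A"] E_swap by simp
  show "((\<lambda>x. \<Sum>w\<in>nb K A x. ip (f w) (g x)) has_sum S) A"
  proof -
    have "infsum (\<lambda>w. (h \<circ> prod.swap) (x,w)) (nb K A x) = (\<Sum>w\<in>nb K A x. ip (f w) (g x))" for x
      using finite_nb by (simp add: h_def)
    thus ?thesis using 2 3 by (simp add: S_def h_def[symmetric])
  qed
qed


lemma has_sum_diff':
  fixes f g :: "'a \<Rightarrow> 'b::{topological_ab_group_add}"
  assumes "(f has_sum a) A" "(g has_sum b) A"
  shows "((\<lambda>x. f x - g x) has_sum (a - b)) A"
proof -
  have "((\<lambda>x. - g x) has_sum (- b)) A" using assms(2) by (simp add: has_sum_uminus)
  from has_sum_add[OF assms(1) this] show ?thesis by simp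
qed

lemma has_sum_single:
  "((\<lambda>x. if x = b then c else 0) has_sum (if b \<in> A then c else (0::'a::{comm_monoid_add,topological_space}))) A"
proof -
  have "((\<lambda>x. if x = b then c else 0) has_sum (if b \<in> A then c else 0)) (A \<inter> {b})"
    by (rule has_sum_finiteI) auto
  thus ?thesis by (subst (asm) has_sum_cong_neutral[where T=A]) auto
qed

lemma pairing:
  assumes AT: "A \<subseteq> tree_vertices K" and H: "\<forall>x\<in>tree_vertices K. hermitian_mat (U x)"
    and s1: "res_sol K U A z b u \<psi>" and s2: "res_sol K U A z' a v \<phi>"
  shows "(if b \<in> A then ip (\<phi> b) u else 0) - (if a \<in> A then ip v (\<psi> a) else 0)
         = (cnj z' - z) * infsum (\<lambda>x. ip (\<phi> x) (\<psi> x)) A"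
proof -
  note e1 = res_solD(3)[OF s1] and e2 = res_solD(3)[OF s2]
  note q1 = res_solD(2)[OF s1] and q2 = res_solD(2)[OF s2]
  define L where "L x = (\<Sum>w\<in>nb K A x. ip (\<phi> x) (\<psi> w))" for x
  define R where "R x = (\<Sum>w\<in>nb K A x. ip (\<phi> w) (\<psi> x))" for x
  define P where "P x = ip (\<phi> x) (\<psi> x)" for x
  define F where "F x = (if x = b then ip (\<phi> b) u else 0) - (if x = a then ip v (\<psi> a) else 0)" for x
  have key: "F x = L x - R x + (cnj z' - z) * P x" if xA: "x \<in> A" for x
  proof -
    have h: "cadj (U x) = U x" using H AT xA by (auto simp: hermitian_mat_def)
    have i1: "ip (\<phi> x) (if x = b then u else 0) = ip (\<phi> x) (U x *v \<psi> x) + L x - z * P x"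
      unfolding e1[OF xA, symmetric]
      by (simp add: ip_add_right ip_diff_right ip_sum_right ip_scale_right L_def P_def)
    have i2: "ip (if x = a then v else 0) (\<psi> x) = ip (U x *v \<phi> x) (\<psi> x) + R x - cnj z' * P x"
      unfolding e2[OF xA, symmetric]
      by (simp add: ip_add_left ip_diff_left ip_sum_left ip_scale_left R_def P_def)
    have i3: "ip (\<phi> x) (U x *v \<psi> x) = ip (U x *v \<phi> x) (\<psi> x)" using ip_mat[of "\<phi> x" "U x" "\<psi> x"] h by simp
    have "F x = ip (\<phi> x) (if x = b then u else 0) - ip (if x = a then v else 0) (\<psi> x)"
      by (simp add: F_def)
    also have "\<dots> = L x - R x + (cnj z' - z) * P x" unfolding i1 i2 i3 by (simp add: algebra_simps)
    finally show ?thesis .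
  qed
  define S where "S = infsum (\<lambda>(x,w). ip (\<phi> x) (\<psi> w)) (EE K A)"
  have hL: "(L has_sum S) A" unfolding L_def S_def by (rule edge_has_sum(1)[OF q2 q1])
  have hR: "(R has_sum S) A" unfolding R_def S_def by (rule edge_has_sum(2)[OF q2 q1])
  have hP: "(P has_sum infsum P A) A" unfolding P_def by (rule has_sum_infsum[OF ip_summable[OF q2 q1]])
  have "((\<lambda>x. L x - R x + (cnj z' - z) * P x) has_sum (S - S + (cnj z' - z) * infsum P A)) A"
    by (intro has_sum_add has_sum_diff' hL hR has_sum_cmult_right hP)
  hence 1: "(F has_sum ((cnj z' - z) * infsum P A)) A"
    by (subst has_sum_cong[OF key]) auto
  have 2: "(F has_sum ((if b \<in> A then ip (\<phi> b) u else 0) - (if a \<in> A then ip v (\<psi> a) else 0))) A"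
    unfolding F_def by (intro has_sum_diff' has_sum_single)
  have PP: "P = (\<lambda>x. ip (\<phi> x) (\<psi> x))" by (simp add: P_def fun_eq_iff)
  show ?thesis using has_sum_unique[OF 2 1] PP by simp
qed

lemma norm_smult_sq: "(norm (c *s (p::complex^'w)))\<^sup>2 = (cmod c)\<^sup>2 * (norm p)\<^sup>2"
  by (simp add: norm_vec_sq sum_distrib_left norm_mult power_mult_distrib)

lemma norm_add_sq: "(norm (p + q :: complex^'w))\<^sup>2 \<le> 2 * (norm p)\<^sup>2 + 2 * (norm q)\<^sup>2"
proof -
  have "norm (p + q) \<le> norm p + norm q" by (rule norm_triangle_ineq)
  hence "(norm (p + q))\<^sup>2 \<le> (norm p + norm q)\<^sup>2" by (simp add: power_mono)
  also have "\<dots> \<le> 2 * (norm p)\<^sup>2 + 2 * (norm q)\<^sup>2"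
  proof -
    have "0 \<le> (norm p - norm q)\<^sup>2" by simp
    thus ?thesis by (simp add: power2_diff power2_sum algebra_simps)
  qed
  finally show ?thesis .
qed

lemma res_sol_lin:
  assumes s1: "res_sol K U A z b v1 \<psi>1" and s2: "res_sol K U A z b v2 \<psi>2"
  shows "res_sol K U A z b (c1 *s v1 + c2 *s v2) (\<lambda>x. c1 *s \<psi>1 x + c2 *s \<psi>2 x)"
proof (rule res_solI)
  show "\<And>x. x \<notin> A \<Longrightarrow> c1 *s \<psi>1 x + c2 *s \<psi>2 x = 0"
    using res_solD(1)[OF s1] res_solD(1)[OF s2] by simp
  show "(\<lambda>x. (norm (c1 *s \<psi>1 x + c2 *s \<psi>2 x))\<^sup>2) summable_on A"
  proof (rule summable_on_comparison_test)
    show "(\<lambda>x. 2 * (cmod c1)\<^sup>2 * (norm (\<psi>1 x))\<^sup>2 + 2 * (cmod c2)\<^sup>2 * (norm (\<psi>2 x))\<^sup>2) summable_on A"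
      using summable_on_add[OF summable_on_cmult_right[OF res_solD(2)[OF s1], of "2 * (cmod c1)\<^sup>2"]
          summable_on_cmult_right[OF res_solD(2)[OF s2], of "2 * (cmod c2)\<^sup>2"]]
      by (simp add: mult.assoc)
    fix x show "(norm (c1 *s \<psi>1 x + c2 *s \<psi>2 x))\<^sup>2 \<le> 2 * (cmod c1)\<^sup>2 * (norm (\<psi>1 x))\<^sup>2 + 2 * (cmod c2)\<^sup>2 * (norm (\<psi>2 x))\<^sup>2"
      using norm_add_sq[of "c1 *s \<psi>1 x" "c2 *s \<psi>2 x"] by (simp add: norm_smult_sq mult.assoc)
  qed simp
  fix x assume xA: "x \<in> A"
  note a1 = res_solD(3)[OF s1 xA] and a2 = res_solD(3)[OF s2 xA]
  have "U x *v (c1 *s \<psi>1 x + c2 *s \<psi>2 x) + (\<Sum>w\<in>nb K A x. c1 *s \<psi>1 w + c2 *s \<psi>2 w) - z *s (c1 *s \<psi>1 x + c2 *s \<psi>2 x)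
     = c1 *s (U x *v \<psi>1 x + (\<Sum>w\<in>nb K A x. \<psi>1 w) - z *s \<psi>1 x) + c2 *s (U x *v \<psi>2 x + (\<Sum>w\<in>nb K A x. \<psi>2 w) - z *s \<psi>2 x)"
    by (simp add: vec_eq_iff matrix_vector_mult_def sum_component sum.distrib sum_distrib_left algebra_simps)
  also have "\<dots> = (if x = b then c1 *s v1 + c2 *s v2 else 0)" unfolding a1 a2 by simp
  finally show "U x *v (c1 *s \<psi>1 x + c2 *s \<psi>2 x) + (\<Sum>w\<in>nb K A x. c1 *s \<psi>1 w + c2 *s \<psi>2 w) - z *s (c1 *s \<psi>1 x + c2 *s \<psi>2 x) = (if x = b then c1 *s v1 + c2 *s v2 else 0)" .
qed

lemma res_sol_zero: "res_sol K U A z b 0 (\<lambda>x. 0)"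
  by (rule res_solI) (auto simp: vec_eq_iff matrix_vector_mult_def)

lemma res_sol_sum:
  assumes "finite S" "\<And>j. j \<in> S \<Longrightarrow> res_sol K U A z b (w j) (\<psi>s j)"
  shows "res_sol K U A z b (\<Sum>j\<in>S. c j *s w j) (\<lambda>x. \<Sum>j\<in>S. c j *s \<psi>s j x)"
  using assms
proof (induction S rule: finite_induct)
  case empty thus ?case using res_sol_zero by simp
next
  case (insert j S)
  have "res_sol K U A z b (1 *s (\<Sum>j\<in>S. c j *s w j) + c j *s w j) (\<lambda>x. 1 *s (\<Sum>j\<in>S. c j *s \<psi>s j x) + c j *s \<psi>s j x)"
    using insert by (intro res_sol_lin) auto
  thus ?case using insert by (simp add: add.commute)
qed

lemma infsum_of_real':
  assumes "f summable_on A"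
  shows "infsum (\<lambda>x. complex_of_real (f x)) A = of_real (infsum f A)"
  by (rule infsumI[OF has_sum_of_real[OF has_sum_infsum[OF assms]]])

lemma cnj_minus: "cnj z - z = - 2 * \<i> * of_real (Im z)"
  by (simp add: complex_eq_iff)

lemma res_sol_unique:
  assumes AT: "A \<subseteq> tree_vertices K" and H: "\<forall>x\<in>tree_vertices K. hermitian_mat (U x)"
    and z: "Im z \<noteq> 0" and s1: "res_sol K U A z b v \<psi>1" and s2: "res_sol K U A z b v \<psi>2"
  shows "\<psi>1 = \<psi>2"
proof -
  define d where "d x = 1 *s \<psi>1 x + (-1) *s \<psi>2 x" for x
  have sd: "res_sol K U A z b 0 d"
    using res_sol_lin[OF s1 s2, of 1 "-1"] by (simp add: d_def[abs_def])
  have "(cnj z - z) * infsum (\<lambda>x. ip (d x) (d x)) A = 0"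
    using pairing[OF AT H sd sd] by (cases "b \<in> A") simp_all
  moreover have "cnj z - z \<noteq> 0" using z by (simp add: cnj_minus)
  ultimately have "infsum (\<lambda>x. ip (d x) (d x)) A = 0" by simp
  hence "infsum (\<lambda>x. complex_of_real ((norm (d x))\<^sup>2)) A = 0" by (simp only: ip_self)
  hence N: "infsum (\<lambda>x. (norm (d x))\<^sup>2) A = 0"
    by (simp only: infsum_of_real'[OF res_solD(2)[OF sd]] of_real_eq_0_iff)
  have "d x = 0" for x
  proof (cases "x \<in> A")
    case True
    have "sum (\<lambda>x. (norm (d x))\<^sup>2) {x} \<le> infsum (\<lambda>x. (norm (d x))\<^sup>2) A"
      by (rule finite_sum_le_infsum[OF res_solD(2)[OF sd]]) (use True in auto)
    thus ?thesis using N by simp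
  next
    case False thus ?thesis using res_solD(1)[OF sd] by simp
  qed
  hence "\<psi>1 x = \<psi>2 x" for x using d_def[of x] by (simp add: vec_eq_iff)
  thus ?thesis by auto
qed

lemma res_sol_bound:
  assumes AT: "A \<subseteq> tree_vertices K" and H: "\<forall>x\<in>tree_vertices K. hermitian_mat (U x)"
    and z: "Im z \<noteq> 0" and s: "res_sol K U A z b v \<psi>"
  shows "infsum (\<lambda>x. (norm (\<psi> x))\<^sup>2) A \<le> (norm v / \<bar>Im z\<bar>)\<^sup>2"
proof -
  define N where "N = infsum (\<lambda>x. (norm (\<psi> x))\<^sup>2) A"
  have N0: "0 \<le> N" unfolding N_def by (rule infsum_nonneg) simp
  have iN: "infsum (\<lambda>x. ip (\<psi> x) (\<psi> x)) A = of_real N"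
    by (simp only: ip_self infsum_of_real'[OF res_solD(2)[OF s]] N_def)
  have pe: "(if b \<in> A then ip (\<psi> b) v else 0) - (if b \<in> A then ip v (\<psi> b) else 0) = (cnj z - z) * of_real N"
    using pairing[OF AT H s s] by (simp only: iN)
  have cm: "cmod (cnj z - z) = 2 * \<bar>Im z\<bar>" by (simp add: cnj_minus norm_mult)
  have "\<bar>Im z\<bar> * N \<le> sqrt N * norm v"
  proof (cases "b \<in> A")
    case False
    have "cnj z \<noteq> z" using z by (simp add: complex_eq_iff)
    thus ?thesis using pe False by simp
  next
    case True
    have "sum (\<lambda>x. (norm (\<psi> x))\<^sup>2) {b} \<le> N" unfolding N_def
      by (rule finite_sum_le_infsum[OF res_solD(2)[OF s]]) (use True in auto)
    hence nb: "norm (\<psi> b) \<le> sqrt N" by (simp add: real_le_rsqrt)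
    have "2 * \<bar>Im z\<bar> * N = cmod (ip (\<psi> b) v - ip v (\<psi> b))"
      using pe True cm N0 by (simp add: norm_mult)
    also have "\<dots> \<le> cmod (ip (\<psi> b) v) + cmod (ip v (\<psi> b))" by (rule norm_triangle_ineq4)
    also have "\<dots> \<le> norm (\<psi> b) * norm v + norm v * norm (\<psi> b)" by (intro add_mono ip_bound)
    also have "\<dots> \<le> 2 * (sqrt N * norm v)" using mult_right_mono[OF nb, of "norm v"] by (simp add: mult.commute)
    finally show ?thesis by simp
  qed
  note B = this
  have e: "sqrt N * sqrt N = N" using N0 by simp
  have A1: "(\<bar>Im z\<bar> * sqrt N) * sqrt N \<le> norm v * sqrt N"
  proof -
    have "(\<bar>Im z\<bar> * sqrt N) * sqrt N = \<bar>Im z\<bar> * N" by (simp only: mult.assoc e)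
    also have "\<dots> \<le> sqrt N * norm v" by (rule B)
    also have "\<dots> = norm v * sqrt N" by (rule mult.commute)
    finally show ?thesis .
  qed
  have "\<bar>Im z\<bar> * sqrt N \<le> norm v"
  proof (cases "sqrt N = 0")
    case True thus ?thesis by simp
  next
    case False
    hence "0 < sqrt N" using N0 by simp
    thus ?thesis using A1 by (rule mult_right_le_imp_le[rotated])
  qed
  hence "sqrt N \<le> norm v / \<bar>Im z\<bar>" using z by (simp add: pos_le_divide_eq mult.commute)
  hence "(sqrt N)\<^sup>2 \<le> (norm v / \<bar>Im z\<bar>)\<^sup>2" by (rule power_mono) (simp add: N0)
  thus ?thesis using N0 by (simp add: N_def)
qed


lemma sum_fun_apply: "(sum g S) y = (\<Sum>s\<in>S. g s y)"
  by (induction S rule: infinite_finite_induct) auto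

lemma exist_finite:
  fixes U :: "nat list \<Rightarrow> complex^'w^'w" and v :: "complex^'w"
  assumes fB: "finite B" and BT: "B \<subseteq> tree_vertices K" and H: "\<forall>x\<in>tree_vertices K. hermitian_mat (U x)"
    and z: "Im z \<noteq> 0"
  shows "\<exists>\<psi>. res_sol K U B z b v \<psi>"
proof -
  define sc where "sc = (\<lambda>(c::complex) (f::nat list \<Rightarrow> complex^'w). (\<lambda>x. c *s f x))"
  have VS: "vector_space sc"
    by (unfold vector_space_def) (auto simp: sc_def fun_eq_iff vec_eq_iff algebra_simps)
  interpret FV: vector_space sc by (rule VS)
  interpret VP: vector_space_pair sc sc ..
  define L where "L f = (\<lambda>x. if x \<in> B then U x *v f x + (\<Sum>w\<in>nb K B x. f w) - z *s f x else 0)" for f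
  have lin: "Vector_Spaces.linear sc sc L" unfolding Vector_Spaces.linear_iff using VS
    by (auto simp: L_def sc_def fun_eq_iff vec_eq_iff matrix_vector_mult_def sum.distrib sum_distrib_left algebra_simps)
  define VB where "VB = {f::nat list \<Rightarrow> complex^'w. \<forall>y. y \<notin> B \<longrightarrow> f y = 0}"
  have subVB: "FV.subspace VB" unfolding FV.subspace_def VB_def by (auto simp: sc_def)
  define \<delta> where "\<delta> (x::nat list) (j::'w) = (\<lambda>y. if y = x then axis j 1 else (0::complex^'w))" for x j
  define X where "X = (\<lambda>(x,j). \<delta> x j) ` (B \<times> UNIV)"
  have fX: "finite X" unfolding X_def using fB by simp
  have XVB: "X \<subseteq> VB" unfolding X_def VB_def \<delta>_def by auto
  have VBX: "VB \<subseteq> FV.span X"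
  proof
    fix f assume f: "f \<in> VB"
    have eq: "f = (\<Sum>p\<in>B \<times> UNIV. sc (f (fst p) $ snd p) (\<delta> (fst p) (snd p)))"
    proof (rule ext, subst vec_eq_iff, rule allI)
      fix y i
      have "(\<Sum>p\<in>B \<times> UNIV. sc (f (fst p) $ snd p) (\<delta> (fst p) (snd p))) y $ i
          = (\<Sum>p\<in>B \<times> UNIV. f (fst p) $ snd p * (if y = fst p \<and> i = snd p then 1 else 0))"
        by (simp add: sc_def \<delta>_def sum_component sum_fun_apply) (intro sum.cong refl, auto simp: axis_def)
      also have "\<dots> = (\<Sum>x\<in>B. \<Sum>j\<in>UNIV. f x $ j * (if y = x \<and> i = j then 1 else 0))"
        by (simp add: sum.cartesian_product case_prod_unfold)
      also have "\<dots> = (\<Sum>x\<in>B. if y = x then f x $ i else 0)"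
        by (intro sum.cong refl) (auto simp: if_distrib cong: if_cong)
      also have "\<dots> = f y $ i" using f fB by (simp add: VB_def)
      finally show "f y $ i = (\<Sum>p\<in>B \<times> UNIV. sc (f (fst p) $ snd p) (\<delta> (fst p) (snd p))) y $ i" by simp
    qed
    show "f \<in> FV.span X"
      by (subst eq, rule FV.span_sum, rule FV.span_scale, rule FV.span_base) (auto simp: X_def)
  qed
  have spanX: "FV.span X = VB"
    using FV.span_minimal[OF XVB subVB] VBX by auto
  have LVB: "L f \<in> VB" for f by (simp add: VB_def L_def)
  have inj: "inj_on L VB"
  proof -
    have "\<forall>f\<in>VB. L f = 0 \<longrightarrow> f = 0"
    proof (intro ballI impI)
      fix f assume f: "f \<in> VB" "L f = 0"
      have "res_sol K U B z b 0 f"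
      proof (rule res_solI)
        show "\<And>x. x \<notin> B \<Longrightarrow> f x = 0" using f(1) by (simp add: VB_def)
        show "(\<lambda>x. (norm (f x))\<^sup>2) summable_on B" using fB by simp
        fix x assume "x \<in> B"
        thus "U x *v f x + (\<Sum>w\<in>nb K B x. f w) - z *s f x = (if x = b then 0 else 0)"
          using fun_cong[OF f(2), of x] by (simp add: L_def)
      qed
      moreover have "res_sol K U B z b 0 (\<lambda>x. 0)" by (rule res_sol_zero)
      ultimately have "f = (\<lambda>x. 0)" by (rule res_sol_unique[OF BT H z])
      thus "f = 0" by (simp add: zero_fun_def)
    qed
    thus ?thesis using VP.linear_inj_on_iff_eq_0[OF lin subVB] by simp
  qed
  obtain Bs where Bs: "Bs \<subseteq> X" "FV.independent Bs" "X \<subseteq> FV.span Bs"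
    using FV.maximal_independent_subset[of X] by blast
  have fBs: "finite Bs" using Bs(1) fX finite_subset by blast
  have "FV.span X \<subseteq> FV.span Bs" using FV.span_mono[OF Bs(3)] FV.span_span by simp
  moreover have "FV.span Bs \<subseteq> FV.span X" using FV.span_mono[OF Bs(1)] .
  ultimately have spB: "FV.span Bs = VB" using spanX by simp
  have BsVB: "Bs \<subseteq> VB" using FV.span_superset[of Bs] spB by simp
  have indL: "FV.independent (L ` Bs)"
    by (rule VP.linear_independent_injective_image[OF lin Bs(2)]) (use inj spB in simp)
  have cardL: "card (L ` Bs) = card Bs" using card_image[OF inj_on_subset[OF inj BsVB]] .
  define t where "t = (\<lambda>x. if x \<in> B \<and> x = b then v else (0::complex^'w))"
  have tVB: "t \<in> VB" by (simp add: t_def VB_def)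
  have "t \<in> FV.span (L ` Bs)"
  proof (rule ccontr)
    assume nt: "t \<notin> FV.span (L ` Bs)"
    have ind2: "FV.independent (insert t (L ` Bs))" by (rule FV.independent_insertI[OF nt indL])
    have sub2: "insert t (L ` Bs) \<subseteq> FV.span Bs" using tVB LVB spB by auto
    have "card (insert t (L ` Bs)) \<le> card Bs" using FV.independent_span_bound[OF fBs ind2 sub2] by simp
    moreover have "t \<notin> L ` Bs" using nt FV.span_superset by blast
    ultimately show False using cardL fBs by simp
  qed
  then obtain f where f: "f \<in> FV.span Bs" "L f = t" using VP.linear_span_image[OF lin, of Bs] by auto
  have fVB: "f \<in> VB" using f spB by simp
  show ?thesis
  proof (intro exI res_solI)
    show "\<And>x. x \<notin> B \<Longrightarrow> f x = 0" using fVB by (simp add: VB_def)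
    show "(\<lambda>x. (norm (f x))\<^sup>2) summable_on B" using fB by simp
    fix x assume "x \<in> B"
    thus "U x *v f x + (\<Sum>w\<in>nb K B x. f w) - z *s f x = (if x = b then v else 0)"
      using fun_cong[OF f(2), of x] by (simp add: L_def t_def)
  qed
qed


lemma mat_smult: "(mat z :: complex^'w^'w) *v y = z *s y"
proof -
  have "(\<Sum>j\<in>UNIV. (if i = j then z else 0) * y$j) = z * y$i" for i
  proof -
    have "(\<Sum>j\<in>UNIV. (if i = j then z else 0) * y$j) = (\<Sum>j\<in>UNIV. if i = j then z * y$j else 0)"
      by (rule sum.cong) auto
    thus ?thesis by simp
  qed
  thus ?thesis by (simp add: vec_eq_iff matrix_vector_mult_def mat_def)
qed

lemma tendsto_mv: "(g \<longlongrightarrow> l) F \<Longrightarrow> ((\<lambda>k. (M::complex^'w^'w) *v g k) \<longlongrightarrow> M *v l) F"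
  by (rule isCont_tendsto_compose[OF matrix_vector_mult_linear_continuous_at])

lemma tendsto_sv: "(g \<longlongrightarrow> l) F \<Longrightarrow> ((\<lambda>k. (z::complex) *s (g k :: complex^'w)) \<longlongrightarrow> z *s l) F"
  using tendsto_mv[of g l F "mat z"] by (simp add: mat_smult)

lemma exist_sol:
  fixes U :: "nat list \<Rightarrow> complex^'w^'w" and v :: "complex^'w"
  assumes AT: "A \<subseteq> tree_vertices K" and H: "\<forall>x\<in>tree_vertices K. hermitian_mat (U x)"
    and z: "Im z \<noteq> 0"
  shows "\<exists>\<psi>. res_sol K U A z b v \<psi>"
proof -
  define Bn where "Bn n = {x\<in>A. length x \<le> n}" for n
  have finB: "finite (Bn n)" for n
  proof (rule finite_subset)
    show "Bn n \<subseteq> {xs. set xs \<subseteq> {..<K} \<and> length xs \<le> n}" using AT by (auto simp: Bn_def tree_vertices_def)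
  qed (rule finite_lists_length_le, simp)
  have BT: "Bn n \<subseteq> tree_vertices K" for n using AT by (auto simp: Bn_def)
  have "\<forall>n. \<exists>\<psi>. res_sol K U (Bn n) z b v \<psi>" using exist_finite[OF finB BT H z] by blast
  then obtain F where F: "\<And>n. res_sol K U (Bn n) z b v (F n)" by metis
  define C where "C = norm v / \<bar>Im z\<bar>"
  have C0: "0 \<le> C" by (simp add: C_def)
  have sumB: "sum (\<lambda>x. (norm (F n x))\<^sup>2) G \<le> C\<^sup>2" if "finite G" for n G
  proof -
    have "sum (\<lambda>x. (norm (F n x))\<^sup>2) G = sum (\<lambda>x. (norm (F n x))\<^sup>2) (G \<inter> Bn n)"
      using res_solD(1)[OF F] that by (intro sum.mono_neutral_right) auto
    also have "\<dots> \<le> sum (\<lambda>x. (norm (F n x))\<^sup>2) (Bn n)"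
      by (rule sum_mono2[OF finB]) auto
    also have "\<dots> = infsum (\<lambda>x. (norm (F n x))\<^sup>2) (Bn n)" using finB by simp
    also have "\<dots> \<le> C\<^sup>2" unfolding C_def by (rule res_sol_bound[OF BT H z F])
    finally show ?thesis .
  qed
  have normB: "norm (F n x) \<le> C" for n x
  proof -
    have "(norm (F n x))\<^sup>2 \<le> C\<^sup>2" using sumB[of "{x}" n] by simp
    thus ?thesis using C0 by (simp add: abs_le_square_iff[symmetric] power2_le_iff_abs_le)
  qed
  define P where "P = (\<lambda>n (s::nat\<Rightarrow>nat). convergent (\<lambda>k. F (s k) (from_nat n)))"
  interpret SS: subseqs P
  proof
    fix n and s :: "nat \<Rightarrow> nat" assume "strict_mono s"
    have "bounded (range (\<lambda>k. F (s k) (from_nat n)))" unfolding bounded_iff using normB by blast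
    then obtain l r where "strict_mono r" "((\<lambda>k. F (s k) (from_nat n)) \<circ> r) \<longlonglongrightarrow> l"
      using bounded_imp_convergent_subsequence by blast
    thus "\<exists>r'. strict_mono r' \<and> P n (s \<circ> r')"
      by (auto simp: P_def convergent_def o_def)
  qed
  define d where "d = SS.diagseq"
  have dmono: "strict_mono d" unfolding d_def by (rule SS.subseq_diagseq)
  have conv: "convergent (\<lambda>k. F (d k) x)" for x
  proof -
    have "P (to_nat x) (d \<circ> (+) (Suc (to_nat x)))" unfolding d_def
    proof (rule SS.diagseq_holds)
      fix r s :: "nat \<Rightarrow> nat" and n assume "strict_mono r" "P n s"
      thus "P n (s \<circ> r)" using convergent_subseq_convergent[of "\<lambda>k. F (s k) (from_nat n)" r]
        by (simp add: P_def o_def)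
    qed
    hence "convergent (\<lambda>k. F (d (k + Suc (to_nat x))) x)" by (simp add: P_def o_def add.commute)
    thus ?thesis by (rule iffD1[OF convergent_ignore_initial_segment[where f="\<lambda>k. F (d k) x" and m="Suc (to_nat x)"]])
  qed
  define \<psi> where "\<psi> x = lim (\<lambda>k. F (d k) x)" for x
  have lim: "(\<lambda>k. F (d k) x) \<longlonglongrightarrow> \<psi> x" for x using conv[of x] by (simp add: \<psi>_def convergent_LIMSEQ_iff)
  show ?thesis
  proof (intro exI res_solI)
    fix x assume "x \<notin> A"
    hence "\<And>k. F (d k) x = 0" using res_solD(1)[OF F] by (auto simp: Bn_def)
    thus "\<psi> x = 0" using lim[of x] by (simp add: LIMSEQ_const_iff)
  next
    show "(\<lambda>x. (norm (\<psi> x))\<^sup>2) summable_on A"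
    proof (rule nonneg_bdd_above_summable_on)
      show "bdd_above (sum (\<lambda>x. (norm (\<psi> x))\<^sup>2) ` {G. G \<subseteq> A \<and> finite G})"
      proof (rule bdd_aboveI2)
        fix G assume "G \<in> {G. G \<subseteq> A \<and> finite G}"
        hence fG: "finite G" by simp
        have "(\<lambda>k. sum (\<lambda>x. (norm (F (d k) x))\<^sup>2) G) \<longlonglongrightarrow> sum (\<lambda>x. (norm (\<psi> x))\<^sup>2) G"
          by (intro tendsto_sum tendsto_power tendsto_norm lim)
        thus "sum (\<lambda>x. (norm (\<psi> x))\<^sup>2) G \<le> C\<^sup>2"
          by (rule LIMSEQ_le_const2) (use sumB[OF fG] in auto)
      qed
    qed simp
  next
    fix x assume xA: "x \<in> A"
    have ev: "\<forall>\<^sub>F k in sequentially. U x *v F (d k) x + (\<Sum>w\<in>nb K A x. F (d k) w) - z *s F (d k) x = (if x = b then v else 0)"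
    proof (rule eventually_sequentiallyI[of "Suc (length x)"])
      fix k assume k: "Suc (length x) \<le> k"
      have dk: "Suc (length x) \<le> d k" using seq_suble[OF dmono, of k] k by simp
      have xB: "x \<in> Bn (d k)" using xA dk by (simp add: Bn_def)
      have "nb K (Bn (d k)) x = nb K A x"
        using dk adj_len[of K x] by (force simp: nb_def Bn_def)
      thus "U x *v F (d k) x + (\<Sum>w\<in>nb K A x. F (d k) w) - z *s F (d k) x = (if x = b then v else 0)"
        using res_solD(3)[OF F xB] by simp
    qed
    have t: "(\<lambda>k. U x *v F (d k) x + (\<Sum>w\<in>nb K A x. F (d k) w) - z *s F (d k) x) \<longlonglongrightarrow>
        U x *v \<psi> x + (\<Sum>w\<in>nb K A x. \<psi> w) - z *s \<psi> x"
      by (intro tendsto_diff tendsto_add tendsto_sum tendsto_mv tendsto_sv lim)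
    have t2: "(\<lambda>k. U x *v F (d k) x + (\<Sum>w\<in>nb K A x. F (d k) w) - z *s F (d k) x) \<longlonglongrightarrow> (if x = b then v else 0)"
      by (rule tendsto_eventually[OF ev])
    show "U x *v \<psi> x + (\<Sum>w\<in>nb K A x. \<psi> w) - z *s \<psi> x = (if x = b then v else 0)"
      using LIMSEQ_unique[OF t t2] .
  qed
qed


definition sol :: "nat \<Rightarrow> (nat list \<Rightarrow> complex^'w^'w) \<Rightarrow> nat list set \<Rightarrow> complex \<Rightarrow> nat list \<Rightarrow> complex^'w
   \<Rightarrow> (nat list \<Rightarrow> complex^'w)" where
  "sol K U A z b v = (THE \<psi>. res_sol K U A z b v \<psi>)"

lemma ip_axis_left: fixes i :: "'w::finite" and q :: "complex^'w" shows "ip (axis i 1) q = q $ i"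
proof -
  have "(\<lambda>k. cnj ((axis i 1::complex^'w) $ k) * q $ k) = (\<lambda>k. if k = i then q $ k else 0)"
    by (auto simp: axis_def)
  hence "ip (axis i 1) q = (\<Sum>k\<in>UNIV. if k = i then q $ k else 0)" unfolding ip_def by (simp only:)
  thus ?thesis by simp
qed

lemma ip_axis_right: fixes j :: "'w::finite" and p :: "complex^'w" shows "ip p (axis j 1) = cnj (p $ j)"
proof -
  have "(\<lambda>k. cnj (p $ k) * (axis j 1::complex^'w) $ k) = (\<lambda>k. if k = j then cnj (p $ j) else 0)"
    by (auto simp: axis_def)
  hence "ip p (axis j 1) = (\<Sum>k\<in>UNIV. if k = j then cnj (p $ j) else 0)" unfolding ip_def by (simp only:)
  thus ?thesis by simp
qed

context
  fixes K :: nat and U :: "nat list \<Rightarrow> complex^'w^'w"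
  assumes H: "\<forall>x\<in>tree_vertices K. hermitian_mat (U x)"
begin

lemma sol_ok:
  assumes AT: "A \<subseteq> tree_vertices K" and z: "Im z \<noteq> 0"
  shows "res_sol K U A z b v (sol K U A z b v)"
proof -
  have "\<exists>!\<psi>. res_sol K U A z b v \<psi>"
    using exist_sol[OF AT H z] res_sol_unique[OF AT H z] by blast
  thus ?thesis unfolding sol_def by (rule theI')
qed

lemma sol_eq:
  assumes AT: "A \<subseteq> tree_vertices K" and z: "Im z \<noteq> 0" and s: "res_sol K U A z b v \<psi>"
  shows "sol K U A z b v = \<psi>"
  using res_sol_unique[OF AT H z sol_ok[OF AT z] s] .

lemma green_mv:
  assumes AT: "A \<subseteq> tree_vertices K" and z: "Im z \<noteq> 0"
  shows "green K U A z x b *v u = sol K U A z b u x"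
proof -
  have s: "res_sol K U A z b (\<Sum>j\<in>UNIV. (u$j) *s axis j 1) (\<lambda>x. \<Sum>j\<in>UNIV. (u$j) *s sol K U A z b (axis j 1) x)"
    by (rule res_sol_sum) (auto intro: sol_ok[OF AT z])
  have "sol K U A z b u = (\<lambda>x. \<Sum>j\<in>UNIV. (u$j) *s sol K U A z b (axis j 1) x)"
    using sol_eq[OF AT z s] by (simp add: basis_expansion)
  hence "sol K U A z b u x = (\<Sum>j\<in>UNIV. (u$j) *s sol K U A z b (axis j 1) x)" by simp
  thus ?thesis
    by (simp add: green_def sol_def[symmetric] vec_eq_iff matrix_vector_mult_def sum_component mult.commute)
qed

lemma green_sym:
  assumes AT: "A \<subseteq> tree_vertices K" and z: "Im z \<noteq> 0"
  shows "green K U A z a b = cadj (green K U A (cnj z) b a)"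
proof -
  have z': "Im (cnj z) \<noteq> 0" using z by simp
  have "green K U A z a b $ i $ j = cnj (green K U A (cnj z) b a $ j $ i)" for i j
  proof -
    define \<psi> where "\<psi> = sol K U A z b (axis j 1)"
    define \<phi> where "\<phi> = sol K U A (cnj z) a (axis i 1)"
    have s1: "res_sol K U A z b (axis j 1) \<psi>" unfolding \<psi>_def by (rule sol_ok[OF AT z])
    have s2: "res_sol K U A (cnj z) a (axis i 1) \<phi>" unfolding \<phi>_def by (rule sol_ok[OF AT z'])
    have p: "(if b \<in> A then ip (\<phi> b) (axis j 1) else 0) - (if a \<in> A then ip (axis i 1) (\<psi> a) else 0) = 0"
      using pairing[OF AT H s1 s2] by simp
    have "ip (\<phi> b) (axis j 1) = ip (axis i 1) (\<psi> a)"
      using p res_solD(1)[OF s1, of a] res_solD(1)[OF s2, of b]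
      by (cases "a \<in> A"; cases "b \<in> A") auto
    hence "cnj (\<phi> b $ j) = \<psi> a $ i"
      by (simp add: ip_axis_left ip_axis_right)
    thus ?thesis by (simp add: green_def \<psi>_def \<phi>_def sol_def)
  qed
  thus ?thesis by (simp add: vec_eq_iff cadj_def)
qed

lemma qform_ip: "qform v A = ip v (A *v v)"
  by (simp add: qform_def ip_def matrix_vector_mult_def sum_distrib_left mult.assoc)

lemma ward:
  assumes AT: "A \<subseteq> tree_vertices K" and z: "Im z \<noteq> 0"
  shows "qform u (imag_part (green K U A z b b)) = of_real (Im z * infsum (\<lambda>x. (norm (green K U A z x b *v u))\<^sup>2) A)"
proof -
  define \<psi> where "\<psi> = sol K U A z b u"
  have s: "res_sol K U A z b u \<psi>" unfolding \<psi>_def by (rule sol_ok[OF AT z])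
  have g: "green K U A z x b *v u = \<psi> x" for x unfolding \<psi>_def by (rule green_mv[OF AT z])
  define N where "N = infsum (\<lambda>x. (norm (\<psi> x))\<^sup>2) A"
  have iN: "infsum (\<lambda>x. ip (\<psi> x) (\<psi> x)) A = of_real N"
    by (simp only: ip_self infsum_of_real'[OF res_solD(2)[OF s]] N_def)
  have pe: "(if b \<in> A then ip (\<psi> b) u else 0) - (if b \<in> A then ip u (\<psi> b) else 0) = (cnj z - z) * of_real N"
    using pairing[OF AT H s s] by (simp only: iN)
  have pe2: "ip (\<psi> b) u - ip u (\<psi> b) = (cnj z - z) * of_real N"
    using pe res_solD(1)[OF s, of b] by (cases "b \<in> A") auto
  have gb: "\<psi> b $ i = (\<Sum>j\<in>UNIV. green K U A z b b $ i $ j * u $ j)" for i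
    using g[of b] by (auto simp: vec_eq_iff matrix_vector_mult_def)
  have "qform u (imag_part (green K U A z b b)) = (ip u (\<psi> b) - ip (\<psi> b) u) / (2 * \<i>)"
  proof -
    have "qform u (imag_part (green K U A z b b)) = (\<Sum>i\<in>UNIV. \<Sum>j\<in>UNIV. cnj (u$i) * ((green K U A z b b $ i $ j - cnj (green K U A z b b $ j $ i)) / (2 * \<i>)) * u$j)"
      by (simp add: qform_def imag_part_def)
    also have "\<dots> = ((\<Sum>i\<in>UNIV. \<Sum>j\<in>UNIV. cnj (u$i) * green K U A z b b $ i $ j * u$j)
        - (\<Sum>i\<in>UNIV. \<Sum>j\<in>UNIV. cnj (u$i) * cnj (green K U A z b b $ j $ i) * u$j)) / (2 * \<i>)"
    proof -
      have "(\<Sum>i\<in>UNIV. \<Sum>j\<in>UNIV. cnj (u$i) * ((green K U A z b b $ i $ j - cnj (green K U A z b b $ j $ i)) / (2 * \<i>)) * u$j)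
        = (\<Sum>i\<in>UNIV. \<Sum>j\<in>UNIV. (cnj (u$i) * green K U A z b b $ i $ j * u$j - cnj (u$i) * cnj (green K U A z b b $ j $ i) * u$j) / (2 * \<i>))"
        by (intro sum.cong refl) (simp add: field_simps)
      thus ?thesis by (simp only: sum_divide_distrib[symmetric] sum_subtractf)
    qed
    also have "(\<Sum>i\<in>UNIV. \<Sum>j\<in>UNIV. cnj (u$i) * green K U A z b b $ i $ j * u$j) = ip u (\<psi> b)"
      by (simp add: gb ip_def sum_distrib_left mult.assoc)
    also have "(\<Sum>i\<in>UNIV. \<Sum>j\<in>UNIV. cnj (u$i) * cnj (green K U A z b b $ j $ i) * u$j) = ip (\<psi> b) u"
    proof -
      have "(\<Sum>i\<in>UNIV. \<Sum>j\<in>UNIV. cnj (u$i) * cnj (green K U A z b b $ j $ i) * u$j)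
          = (\<Sum>j\<in>UNIV. \<Sum>i\<in>UNIV. cnj (u$i) * cnj (green K U A z b b $ j $ i) * u$j)" by (rule sum.swap)
      also have "\<dots> = ip (\<psi> b) u"
        by (simp add: gb ip_def sum_distrib_left sum_distrib_right mult_ac)
      finally show ?thesis .
    qed
    finally show ?thesis .
  qed
  also have "\<dots> = - ((cnj z - z) * of_real N) / (2 * \<i>)" by (subst pe2[symmetric]) simp
  also have "\<dots> = of_real (Im z * N)" by (simp add: cnj_minus field_simps)
  finally show ?thesis using g by (simp add: N_def)
qed

end


definition sub :: "nat \<Rightarrow> nat list \<Rightarrow> nat list set" where
  "sub K y = {w \<in> tree_vertices K. \<exists>s. w = y @ s}"

lemma butlast_T: "y \<in> tree_vertices K \<Longrightarrow> butlast y \<in> tree_vertices K"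
  by (auto simp: tree_vertices_def dest: in_set_butlastD)

lemma sub_T: "sub K y \<subseteq> tree_vertices K" by (auto simp: sub_def)

lemma y_sub: "y \<in> tree_vertices K \<Longrightarrow> y \<in> sub K y" by (auto simp: sub_def)

lemma butlast_not_sub: assumes "y \<noteq> []" shows "butlast y \<notin> sub K y"
proof
  assume "butlast y \<in> sub K y"
  then obtain s where "butlast y = y @ s" by (auto simp: sub_def)
  hence "length y - 1 = length y + length s" by (metis length_butlast length_append)
  moreover have "0 < length y" using assms by simp
  ultimately show False by arith
qed

lemma adj_butlast: "y \<in> tree_vertices K \<Longrightarrow> y \<noteq> [] \<Longrightarrow> tree_adj K y (butlast y)"
  by (auto simp: tree_adj_def tree_parent_def butlast_T)

lemma adj_out_sub:
  assumes w: "w \<in> sub K y" and adj: "tree_adj K w v" and v: "v \<notin> sub K y"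
  shows "w = y \<and> v = butlast y"
proof -
  obtain s where ws: "w = y @ s" using w by (auto simp: sub_def)
  have vT: "v \<in> tree_vertices K" using adj by (simp add: tree_adj_def)
  from adj have c: "(w \<noteq> [] \<and> v = butlast w) \<or> (v \<noteq> [] \<and> w = butlast v)"
    by (simp add: tree_adj_def tree_parent_def)
  show ?thesis
  proof (cases "v \<noteq> [] \<and> w = butlast v")
    case True
    hence "v = y @ (s @ [last v])" using ws by (metis append_butlast_last_id append.assoc)
    hence "v \<in> sub K y" using vT by (auto simp: sub_def)
    thus ?thesis using v by simp
  next
    case False
    hence vb: "v = butlast w" "w \<noteq> []" using c by auto
    show ?thesis
    proof (cases "s = []")
      case True thus ?thesis using ws vb by simp
    next
      case False
      hence "v = y @ butlast s" using vb ws by (simp add: butlast_append)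
      hence "v \<in> sub K y" using vT by (auto simp: sub_def)
      thus ?thesis using v by simp
    qed
  qed
qed

context
  fixes K :: nat and U :: "nat list \<Rightarrow> complex^'w^'w"
  assumes H: "\<forall>x\<in>tree_vertices K. hermitian_mat (U x)"
begin

lemma restrict:
  assumes yT: "y \<in> tree_vertices K" and yne: "y \<noteq> []"
    and s: "res_sol K U (tree_vertices K) z [] u \<Phi>"
  shows "res_sol K U (tree_vertices K - {butlast y}) z y (- \<Phi> (butlast y)) (\<lambda>w. if w \<in> sub K y then \<Phi> w else 0)"
proof (rule res_solI)
  define T where "T = tree_vertices K"
  define x where "x = butlast y"
  have xns: "x \<notin> sub K y" unfolding x_def by (rule butlast_not_sub[OF yne])
  show "\<And>w. w \<notin> tree_vertices K - {butlast y} \<Longrightarrow> (if w \<in> sub K y then \<Phi> w else 0) = 0"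
    using sub_T[of K y] butlast_not_sub[OF yne, of K] by auto
  show "(\<lambda>w. (norm (if w \<in> sub K y then \<Phi> w else 0))\<^sup>2) summable_on tree_vertices K - {butlast y}"
  proof (rule summable_on_comparison_test)
    show "(\<lambda>w. (norm (\<Phi> w))\<^sup>2) summable_on tree_vertices K - {butlast y}"
      by (rule summable_on_subset_banach[OF res_solD(2)[OF s]]) auto
  qed auto
  fix w assume wA: "w \<in> tree_vertices K - {butlast y}"
  have nbeq: "nb K (tree_vertices K - {x}) w = nb K T w - {x}" by (auto simp: nb_def T_def)
  show "U w *v (if w \<in> sub K y then \<Phi> w else 0) + (\<Sum>v\<in>nb K (tree_vertices K - {butlast y}) w. if v \<in> sub K y then \<Phi> v else 0)
      - z *s (if w \<in> sub K y then \<Phi> w else 0) = (if w = y then - \<Phi> (butlast y) else 0)"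
  proof (cases "w \<in> sub K y")
    case True
    have wne: "w \<noteq> []" using True yne by (auto simp: sub_def)
    have eP: "U w *v \<Phi> w + (\<Sum>v\<in>nb K T w. \<Phi> v) - z *s \<Phi> w = 0"
      using res_solD(3)[OF s, of w] wA wne by (simp add: T_def)
    have insub: "v \<in> sub K y" if "v \<in> nb K (tree_vertices K - {x}) w" for v
      using that adj_out_sub[OF True, of v] by (auto simp: nb_def x_def)
    have xin: "x \<in> nb K T w \<longleftrightarrow> w = y"
    proof
      assume "x \<in> nb K T w"
      thus "w = y" using adj_out_sub[OF True, of x] xns by (simp add: nb_def)
    next
      assume "w = y"
      thus "x \<in> nb K T w" using adj_butlast[OF yT yne] butlast_T[OF yT] by (simp add: nb_def x_def T_def)
    qed
    have sumeq: "(\<Sum>v\<in>nb K T w. \<Phi> v) = (\<Sum>v\<in>nb K T w - {x}. \<Phi> v) + (if w = y then \<Phi> x else 0)"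
    proof (cases "w = y")
      case True
      hence "x \<in> nb K T w" using xin by simp
      thus ?thesis using True finite_nb by (simp add: sum.remove add.commute)
    next
      case False
      hence "x \<notin> nb K T w" using xin by simp
      thus ?thesis using False by simp
    qed
    have s2: "(\<Sum>v\<in>nb K (tree_vertices K - {x}) w. if v \<in> sub K y then \<Phi> v else 0) = (\<Sum>v\<in>nb K T w - {x}. \<Phi> v)"
      using insub nbeq by (intro sum.cong) auto
    show ?thesis using True eP s2 sumeq unfolding x_def[symmetric]
      by (auto simp: algebra_simps)
  next
    case False
    have "(\<Sum>v\<in>nb K (tree_vertices K - {butlast y}) w. if v \<in> sub K y then \<Phi> v else 0) = 0"
    proof (rule sum.neutral, rule ballI)
      fix v assume v: "v \<in> nb K (tree_vertices K - {butlast y}) w"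
      have "v \<notin> sub K y"
      proof
        assume vs: "v \<in> sub K y"
        have "tree_adj K v w" using v by (simp add: nb_def adj_sym)
        hence "w = butlast y" using adj_out_sub[OF vs _ False] by simp
        thus False using wA by simp
      qed
      thus "(if v \<in> sub K y then \<Phi> v else 0) = 0" by simp
    qed
    moreover have "w \<noteq> y" using False y_sub[OF yT] by auto
    ultimately show ?thesis using False by (simp add: vec_eq_iff matrix_vector_mult_def)
  qed
qed

end


lemma qform_ip2: "qform v A = ip v (A *v v)"
  by (simp add: qform_def ip_def matrix_vector_mult_def sum_distrib_left mult.assoc)

lemma imag_cadj: "imag_part (cadj G) = - imag_part G"
  by (simp add: vec_eq_iff imag_part_def cadj_def field_simps)

lemma cadj_cadj: "cadj (cadj M) = M"
  by (simp add: vec_eq_iff cadj_def)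

lemma qform_sandwich: "qform u (cadj M ** Q ** M) = qform (M *v u) Q"
proof -
  have "qform u (cadj M ** Q ** M) = ip u (cadj M *v (Q *v (M *v u)))"
    unfolding qform_ip2 by (simp only: matrix_vector_mul_assoc[symmetric])
  also have "\<dots> = ip (M *v u) (Q *v (M *v u))" by (simp add: ip_mat cadj_cadj)
  finally show ?thesis by (simp add: qform_ip2)
qed

lemma qform_neg: "qform u (- Q) = - qform u Q"
  by (simp add: qform_def sum_negf)

lemma qform_add: "qform u (A + B) = qform u A + qform u B"
  by (simp add: qform_def sum.distrib algebra_simps)

lemma qform_zero: "qform u 0 = 0" by (simp add: qform_def)

lemma qform_sum: "qform u (sum F S) = (\<Sum>s\<in>S. qform u (F s))"
  by (induction S rule: infinite_finite_induct) (simp_all add: qform_add qform_zero)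

lemma finite_sphere: "finite (sphere K n)"
proof (rule finite_subset)
  show "sphere K n \<subseteq> {xs. set xs \<subseteq> {..<K} \<and> length xs \<le> n}" by (auto simp: sphere_def tree_vertices_def)
qed (rule finite_lists_length_le, simp)

lemma children_img: "tree_children K x = (\<lambda>k. x @ [k]) ` {..<K}"
  by (auto simp: tree_children_def)

lemma finite_children: "finite (tree_children K x)" by (simp add: children_img)

lemma sub_disj: "length y = length y' \<Longrightarrow> w \<in> sub K y \<Longrightarrow> w \<in> sub K y' \<Longrightarrow> y = y'"
  by (auto simp: sub_def append_eq_append_conv)


theorem lemmal:
  fixes K :: nat and U :: "nat list \<Rightarrow> complex^'w^'w" and E \<eta> :: real and n :: nat
  assumes "K \<ge> 2"
    and "\<forall>x\<in>tree_vertices K. hermitian_mat (U x)"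
    and "\<eta> > 0"
  shows "qf_le
     (\<Sum>x\<in>sphere K n. \<Sum>y\<in>tree_children K x.
        green K U (tree_vertices K) (Complex E \<eta>) [] x ** imag_part (Gam K U E \<eta> y)
          ** cadj (green K U (tree_vertices K) (Complex E \<eta>) [] x))
     (imag_part (Gam K U E \<eta> []))"
proof -
  note H = assms(2)
  define T where "T = tree_vertices K"
  define z where "z = Complex E \<eta>"
  have z0: "Im z \<noteq> 0" and zc0: "Im (cnj z) \<noteq> 0" and Imzc: "Im (cnj z) = - \<eta>"
    using assms(3) by (auto simp: z_def)
  have TT: "T \<subseteq> tree_vertices K" by (simp add: T_def)
  have Imz: "Im z = \<eta>" by (simp add: z_def)
  show ?thesis unfolding qf_le_def
  proof
    fix u :: "complex^'w"
    define \<Phi> where "\<Phi> = sol K U T (cnj z) [] u"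
    have s\<Phi>: "res_sol K U T (cnj z) [] u \<Phi>" unfolding \<Phi>_def by (rule sol_ok[OF H TT zc0])
    define f where "f w = (norm (\<Phi> w))\<^sup>2" for w
    have fs: "f summable_on T" unfolding f_def[abs_def] by (rule res_solD(2)[OF s\<Phi>])
    have f0: "0 \<le> f w" for w by (simp add: f_def)
    have M\<Phi>: "green K U T (cnj z) w [] *v u = \<Phi> w" for w
      unfolding \<Phi>_def by (rule green_mv[OF H TT zc0])
    have R: "qform u (imag_part (Gam K U E \<eta> [])) = of_real (\<eta> * infsum f T)"
    proof -
      have "Gam K U E \<eta> [] = cadj (green K U T (cnj z) [] [])"
        using green_sym[OF H TT z0, of "[]" "[]"] by (simp add: Gam_def T_def z_def)
      hence "qform u (imag_part (Gam K U E \<eta> [])) = - qform u (imag_part (green K U T (cnj z) [] []))"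
        by (simp add: imag_cadj qform_neg)
      also have "\<dots> = - of_real (Im (cnj z) * infsum (\<lambda>x. (norm (green K U T (cnj z) x [] *v u))\<^sup>2) T)"
        by (simp add: ward[OF H TT zc0])
      also have "\<dots> = of_real (\<eta> * infsum f T)" by (simp add: M\<Phi> Imz f_def[abs_def])
      finally show ?thesis .
    qed
    have trm: "qform u (green K U T z [] x ** imag_part (Gam K U E \<eta> y) ** cadj (green K U T z [] x))
        = of_real (\<eta> * infsum f (sub K y))" if xS: "x \<in> sphere K n" and yc: "y \<in> tree_children K x" for x y
    proof -
      obtain k where k: "k < K" "y = x @ [k]" using yc by (auto simp: tree_children_def)
      have xT: "x \<in> T" using xS by (simp add: sphere_def T_def)
      have yT: "y \<in> T" using xT k by (auto simp: T_def tree_vertices_def)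
      have yne: "y \<noteq> []" and bx: "butlast y = x" using k by auto
      have AT: "T - {x} \<subseteq> tree_vertices K" by (auto simp: T_def)
      have "Gam K U E \<eta> y = green K U (T - {x}) z y y"
        using yne bx by (simp add: Gam_def tree_parent_def T_def z_def)
      also have "\<dots> = cadj (green K U (T - {x}) (cnj z) y y)" by (rule green_sym[OF H AT z0])
      finally have G: "imag_part (Gam K U E \<eta> y) = - imag_part (green K U (T - {x}) (cnj z) y y)"
        by (simp add: imag_cadj)
      have gx: "green K U T z [] x = cadj (green K U T (cnj z) x [])" by (rule green_sym[OF H TT z0])
      have "qform u (green K U T z [] x ** imag_part (Gam K U E \<eta> y) ** cadj (green K U T z [] x))
          = qform (\<Phi> x) (- imag_part (green K U (T - {x}) (cnj z) y y))"
        unfolding gx cadj_cadj G qform_sandwich M\<Phi> ..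
      also have "\<dots> = - of_real (Im (cnj z) * infsum (\<lambda>w. (norm (green K U (T - {x}) (cnj z) w y *v \<Phi> x))\<^sup>2) (T - {x}))"
        by (simp add: qform_neg ward[OF H AT zc0])
      also have "infsum (\<lambda>w. (norm (green K U (T - {x}) (cnj z) w y *v \<Phi> x))\<^sup>2) (T - {x}) = infsum f (sub K y)"
      proof -
        define ch where "ch w = (if w \<in> sub K y then \<Phi> w else 0)" for w
        have r: "res_sol K U (T - {x}) (cnj z) y (- \<Phi> x) ch"
          using restrict[OF H yT[unfolded T_def] yne s\<Phi>[unfolded T_def]] bx by (simp add: ch_def[abs_def] T_def)
        have r2: "res_sol K U (T - {x}) (cnj z) y (\<Phi> x) (\<lambda>w. - ch w)"
          using res_sol_lin[OF r r, of "-1" 0] by (simp add: vec_eq_iff)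
        have "green K U (T - {x}) (cnj z) w y *v \<Phi> x = - ch w" for w
          using green_mv[OF H AT zc0] sol_eq[OF H AT zc0 r2] by simp
        hence "infsum (\<lambda>w. (norm (green K U (T - {x}) (cnj z) w y *v \<Phi> x))\<^sup>2) (T - {x})
            = infsum (\<lambda>w. (norm (ch w))\<^sup>2) (T - {x})" by simp
        also have "\<dots> = infsum f (sub K y)"
        proof (rule infsum_cong_neutral)
          show "\<And>w. w \<in> sub K y - (T - {x}) \<Longrightarrow> f w = 0"
            using sub_T[of K y] butlast_not_sub[OF yne, of K] bx by (auto simp: T_def)
        qed (auto simp: ch_def f_def)
        finally show ?thesis .
      qed
      finally show ?thesis by (simp add: Imz)
    qed
    define Y where "Y x = (\<Union>y\<in>tree_children K x. sub K y)" for x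
    have lenc: "length y = Suc n" if "x \<in> sphere K n" "y \<in> tree_children K x" for x y
      using that by (auto simp: sphere_def tree_children_def)
    have subsT: "sub K y \<subseteq> T" for y using sub_T by (simp add: T_def)
    have fsub: "f summable_on B" if "B \<subseteq> T" for B by (rule summable_on_subset_banach[OF fs that])
    have inner: "(\<Sum>y\<in>tree_children K x. infsum f (sub K y)) = infsum f (Y x)" if xS: "x \<in> sphere K n" for x
      unfolding Y_def
    proof (rule sum_infsum)
      show "finite (tree_children K x)" by (rule finite_children)
      show "\<And>a. a \<in> tree_children K x \<Longrightarrow> f summable_on sub K a" using fsub subsT by blast
      fix a a' assume aa: "a \<in> tree_children K x" "a' \<in> tree_children K x" "a \<noteq> a'"
      have "length a = length a'" using lenc[OF xS aa(1)] lenc[OF xS aa(2)] by simp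
      thus "sub K a \<inter> sub K a' = {}" using sub_disj[of a a' _ K] aa(3) by blast
    qed
    have outer: "(\<Sum>x\<in>sphere K n. infsum f (Y x)) = infsum f (\<Union>x\<in>sphere K n. Y x)"
    proof (rule sum_infsum)
      show "finite (sphere K n)" by (rule finite_sphere)
      show "\<And>a. a \<in> sphere K n \<Longrightarrow> f summable_on Y a" using fsub subsT by (simp add: Y_def UN_least)
      show "Y a \<inter> Y a' = {}" if "a \<in> sphere K n" "a' \<in> sphere K n" "a \<noteq> a'" for a a'
      proof (rule ccontr)
        assume "Y a \<inter> Y a' \<noteq> {}"
        then obtain w y y' where "y \<in> tree_children K a" "y' \<in> tree_children K a'" "w \<in> sub K y" "w \<in> sub K y'"
          by (auto simp: Y_def)
        moreover have "length y = length y'" using lenc that calculation by metis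
        ultimately have "y = y'" using sub_disj by blast
        thus False using \<open>y \<in> tree_children K a\<close> \<open>y' \<in> tree_children K a'\<close> that(3)
          by (auto simp: tree_children_def)
      qed
    qed
    have le: "infsum f (\<Union>x\<in>sphere K n. Y x) \<le> infsum f T"
    proof (rule infsum_mono_neutral)
      show "f summable_on (\<Union>x\<in>sphere K n. Y x)" by (rule fsub) (use subsT in \<open>auto simp: Y_def\<close>)
      show "\<And>x. x \<in> (\<Union>x\<in>sphere K n. Y x) - T \<Longrightarrow> f x \<le> 0" using subsT by (auto simp: Y_def)
    qed (use fs f0 in auto)
    have "Re (qform u (\<Sum>x\<in>sphere K n. \<Sum>y\<in>tree_children K x.
        green K U T z [] x ** imag_part (Gam K U E \<eta> y) ** cadj (green K U T z [] x)))
        = (\<Sum>x\<in>sphere K n. \<Sum>y\<in>tree_children K x. \<eta> * infsum f (sub K y))"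
      by (simp add: qform_sum trm)
    also have "\<dots> = \<eta> * (\<Sum>x\<in>sphere K n. infsum f (Y x))"
    proof -
      have "(\<Sum>x\<in>sphere K n. \<Sum>y\<in>tree_children K x. \<eta> * infsum f (sub K y)) = (\<Sum>x\<in>sphere K n. \<eta> * infsum f (Y x))"
        by (rule sum.cong[OF refl]) (simp add: sum_distrib_left[symmetric] inner)
      thus ?thesis by (simp add: sum_distrib_left)
    qed
    also have "\<dots> \<le> \<eta> * infsum f T" using outer le assms(3) by simp
    also have "\<dots> = Re (qform u (imag_part (Gam K U E \<eta> [])))" by (simp add: R)
    finally show "Re (qform u (\<Sum>x\<in>sphere K n. \<Sum>y\<in>tree_children K x.
        green K U (tree_vertices K) (Complex E \<eta>) [] x ** imag_part (Gam K U E \<eta> y)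
          ** cadj (green K U (tree_vertices K) (Complex E \<eta>) [] x)))
      \<le> Re (qform u (imag_part (Gam K U E \<eta> [])))" by (simp add: T_def z_def)
  qed
qed


end
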